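(* Let $d,m\ge 1$ and, for each $u\in\mathbb{R}$ and $\mu\in\{1,\ldots,m\}$, let $M_\mu^u\in\mathbb{C}^{d\times d}$ be matrices with $\sum_{\mu=1}^m (M_\mu^u)^\dagger M_\mu^u=\mathrm{I}$ for every $u$, such that each $u\mapsto M_\mu^u$ is of class $C^2$, and such that for $u=0$ all $M_\mu^0$ are diagonal in a common orthonormal basis $\{|n\rangle : n=1,\ldots,d\}$ of $\mathbb{C}^d$: $M_\mu^0=\sum_{n=1}^d c_{\mu,n}|n\rangle\langle n|$ with $c_{\mu,n}\in\mathbb{C}$. Define the $d\times d$ real matrix $R$ by $$R_{n_1,n_2}=\sum_{\mu=1}^m\Big(2\Big|\langle n_1|\tfrac{d (M_\mu^u)^\dagger}{du}\big|_{u=0}|n_2\rangle\Big|^2+2\delta_{n_1,n_2}\,\mathrm{Re}\Big(c_{\mu,n_1}\langle n_1|\tfrac{d^2 (M_\mu^u)^\dagger}{du^2}\big|_{u=0}|n_2\rangle\Big)\Big).$$ If $R\neq 0$, then $P=\mathrm{I}-R/\mathrm{tr}(R)$ is well defined, has non-negative entries, and is a right stochastic matrix (each row sums to $1$).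
   Context: $\mathrm{I}$ denotes the identity matrix, $\dagger$ the conjugate transpose, $\delta$ the Kronecker delta. *)

theory Defs
  imports "HOL-Analysis.Analysis"
begin

definition cadj :: "complex^'n^'n \<Rightarrow> complex^'n^'n" where
  "cadj A = (\<chi> i j. cnj (A $ j $ i))"

definition cinner :: "complex^'n \<Rightarrow> complex^'n \<Rightarrow> complex" where
  "cinner x y = (\<Sum>i\<in>UNIV. cnj (x $ i) * y $ i)"

definition braket :: "complex^'n \<Rightarrow> complex^'n^'n \<Rightarrow> complex^'n \<Rightarrow> complex" where
  "braket x A y = cinner x (A *v y)"

definition ketbra :: "complex^'n \<Rightarrow> complex^'n \<Rightarrow> complex^'n^'n" where
  "ketbra x y = (\<chi> i j. x $ i * cnj (y $ j))"

definition cscale :: "complex \<Rightarrow> complex^'n^'n \<Rightarrow> complex^'n^'n" where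
  "cscale c A = (\<chi> i j. c * A $ i $ j)"

end

theory Submission
  imports Defs
begin



lemma final_alg:
  fixes R :: "real^'n^'n"
  assumes off: "\<And>i j. i \<noteq> j \<Longrightarrow> 0 \<le> R$i$j"
    and rows: "\<And>i. (\<Sum>j\<in>UNIV. R$i$j) = 0"
    and nz: "R \<noteq> 0"
  shows "trace R \<noteq> 0
     \<and> (let P = mat 1 - (1 / trace R) *\<^sub>R R in
          (\<forall>i j. 0 \<le> P $ i $ j) \<and> (\<forall>i. (\<Sum>j\<in>UNIV. P $ i $ j) = 1))"
proof -
  have split: "(\<Sum>j\<in>UNIV. R$i$j) = R$i$i + (\<Sum>j\<in>UNIV-{i}. R$i$j)" for i
    by (rule sum.remove) auto
  have offs: "(\<Sum>j\<in>UNIV-{i}. R$i$j) \<ge> 0" for i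
    by (rule sum_nonneg) (auto intro: off)
  have dg: "R$i$i = - (\<Sum>j\<in>UNIV-{i}. R$i$j)" for i using split[of i] rows[of i] by linarith
  have dneg: "R$i$i \<le> 0" for i using dg[of i] offs[of i] by linarith
  have tr: "trace R = (\<Sum>i\<in>UNIV. R$i$i)" by (simp add: trace_def)
  have tle: "trace R \<le> R$i$i" for i
  proof -
    have "trace R = R$i$i + (\<Sum>j\<in>UNIV-{i}. R$j$j)" unfolding tr by (rule sum.remove) auto
    moreover have "(\<Sum>j\<in>UNIV-{i}. R$j$j) \<le> 0" by (rule sum_nonpos) (simp add: dneg)
    ultimately show ?thesis by linarith
  qed
  have tneg: "trace R < 0"
  proof (rule ccontr)
    assume "\<not> trace R < 0"
    hence t0: "trace R = 0" using tle[of undefined] dneg[of undefined] by linarith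
    have d0: "R$i$i = 0" for i using tle[of i] dneg[of i] t0 by linarith
    have o0: "R$i$j = 0" for i j
    proof (cases "i = j")
      case True thus ?thesis using d0 by simp
    next
      case False
      have "(\<Sum>j\<in>UNIV-{i}. R$i$j) = 0" using dg[of i] d0[of i] by linarith
      moreover have "\<forall>k\<in>UNIV-{i}. 0 \<le> R$i$k" by (simp add: off)
      ultimately have "\<forall>k\<in>UNIV-{i}. R$i$k = 0" using sum_nonneg_eq_0_iff[of "UNIV-{i}" "\<lambda>k. R$i$k"] by (simp only: finite)
      thus ?thesis using False by blast
    qed
    have "R = 0" by (simp add: vec_eq_iff o0)
    thus False using nz by simp
  qed
  define t where "t = trace R"
  have P1: "0 \<le> (mat 1 - (1 / t) *\<^sub>R R) $ i $ j" for i j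
  proof (cases "i = j")
    case True
    have "R$i$i / t \<le> 1" using tle[of i] tneg unfolding t_def by (simp add: divide_le_eq_1)
    thus ?thesis using True by (simp add: mat_def)
  next
    case False
    have "(1/t) * R$i$j \<le> 0" using off[OF False] tneg unfolding t_def
      by (simp add: divide_le_0_iff)
    thus ?thesis using False by (simp add: mat_def)
  qed
  have P2: "(\<Sum>j\<in>UNIV. (mat 1 - (1 / t) *\<^sub>R R) $ i $ j) = 1" for i
  proof -
    have "(\<Sum>j\<in>UNIV. (mat 1 - (1 / t) *\<^sub>R R) $ i $ j) = (\<Sum>j\<in>UNIV. (if i = j then 1 else 0) - (1/t) * R$i$j)"
      by (simp add: mat_def)
    also have "\<dots> = 1 - (1/t) * (\<Sum>j\<in>UNIV. R$i$j)" by (simp add: sum_subtractf sum_distrib_left)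
    finally show ?thesis using rows by simp
  qed
  show ?thesis using tneg P1 P2 unfolding t_def Let_def by auto
qed




lemma ent_deriv:
  fixes F :: "real \<Rightarrow> complex^'n^'n"
  assumes "(F has_vector_derivative F') (at u)"
  shows "((\<lambda>u. F u $ i $ j) has_vector_derivative F' $ i $ j) (at u)"
  using bounded_linear.has_vector_derivative[OF bounded_linear_vec_nth[of j]
      bounded_linear.has_vector_derivative[OF bounded_linear_vec_nth[of i] assms]] by simp

lemma second_identity:
  fixes M M1 M2 :: "'m::finite \<Rightarrow> real \<Rightarrow> complex^'n^'n"
  assumes complete: "\<And>u. (\<Sum>\<mu>\<in>UNIV. cadj (M \<mu> u) ** M \<mu> u) = mat 1"
    and deriv1: "\<And>\<mu> u. (M \<mu> has_vector_derivative M1 \<mu> u) (at u)"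
    and deriv2: "\<And>\<mu> u. (M1 \<mu> has_vector_derivative M2 \<mu> u) (at u)"
  shows "(\<Sum>\<mu>\<in>UNIV. \<Sum>j\<in>UNIV. cnj (M2 \<mu> 0 $j$i) * M \<mu> 0 $j$k
            + 2 * (cnj (M1 \<mu> 0 $j$i) * M1 \<mu> 0 $j$k) + cnj (M \<mu> 0 $j$i) * M2 \<mu> 0 $j$k) = 0"
proof -
  define E where "E = (\<lambda>u. \<Sum>\<mu>\<in>UNIV. \<Sum>j\<in>UNIV. cnj (M \<mu> u $j$i) * M \<mu> u $j$k)"
  define D where "D = (\<lambda>u. \<Sum>\<mu>\<in>UNIV. \<Sum>j\<in>UNIV. cnj (M \<mu> u $j$i) * M1 \<mu> u $j$k + cnj (M1 \<mu> u $j$i) * M \<mu> u $j$k)"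
  define D2 where "D2 = (\<lambda>u. \<Sum>\<mu>\<in>UNIV. \<Sum>j\<in>UNIV. (cnj (M \<mu> u $j$i) * M2 \<mu> u $j$k + cnj (M1 \<mu> u $j$i) * M1 \<mu> u $j$k)
        + (cnj (M1 \<mu> u $j$i) * M1 \<mu> u $j$k + cnj (M2 \<mu> u $j$i) * M \<mu> u $j$k))"
  have Ec: "E = (\<lambda>u. mat 1 $ i $ k)"
  proof
    fix u
    have "mat 1 $ i $ k = (\<Sum>\<mu>\<in>UNIV. cadj (M \<mu> u) ** M \<mu> u) $ i $ k" using complete by simp
    also have "\<dots> = E u" by (simp add: E_def matrix_matrix_mult_def cadj_def)
    finally show "E u = mat 1 $ i $ k" by simp
  qed
  have dE: "(E has_vector_derivative D u) (at u)" for u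
    unfolding E_def D_def
    by (intro has_vector_derivative_sum has_vector_derivative_mult has_vector_derivative_cnj ent_deriv deriv1)
  have D0: "D u = 0" for u
  proof -
    have "(E has_vector_derivative 0) (at u)" unfolding Ec by (rule has_vector_derivative_const)
    thus ?thesis using dE[of u] vector_derivative_unique_at by metis
  qed
  have dD: "(D has_vector_derivative D2 0) (at 0)"
    unfolding D2_def D_def
    by (intro has_vector_derivative_sum has_vector_derivative_add has_vector_derivative_mult
        has_vector_derivative_cnj ent_deriv deriv1 deriv2)
  have "D = (\<lambda>u. 0)" using D0 by auto
  hence "(D has_vector_derivative 0) (at 0)" by (simp add: has_vector_derivative_const)
  hence "D2 0 = 0" using dD vector_derivative_unique_at by metis
  moreover have "D2 0 = (\<Sum>\<mu>\<in>UNIV. \<Sum>j\<in>UNIV. cnj (M2 \<mu> 0 $j$i) * M \<mu> 0 $j$k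
            + 2 * (cnj (M1 \<mu> 0 $j$i) * M1 \<mu> 0 $j$k) + cnj (M \<mu> 0 $j$i) * M2 \<mu> 0 $j$k)"
    unfolding D2_def by (intro sum.cong refl) (simp add: algebra_simps)
  ultimately show ?thesis by simp
qed



definition sd :: "complex^'n \<Rightarrow> ('n \<Rightarrow> 'n \<Rightarrow> complex) \<Rightarrow> complex" where
  "sd x F = (\<Sum>i\<in>UNIV. \<Sum>k\<in>UNIV. cnj (x$i) * F i k * x$k)"

lemma sd_sum: "sd x (\<lambda>i k. \<Sum>\<mu>\<in>(UNIV::'m::finite set). F \<mu> i k) = (\<Sum>\<mu>\<in>UNIV. sd x (F \<mu>))"
proof -
  have "sd x (\<lambda>i k. \<Sum>\<mu>\<in>(UNIV::'m set). F \<mu> i k) = (\<Sum>i\<in>UNIV. \<Sum>k\<in>UNIV. \<Sum>\<mu>\<in>UNIV. cnj (x$i) * F \<mu> i k * x$k)"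
    by (simp add: sd_def sum_distrib_left sum_distrib_right)
  also have "\<dots> = (\<Sum>i\<in>UNIV. \<Sum>\<mu>\<in>UNIV. \<Sum>k\<in>UNIV. cnj (x$i) * F \<mu> i k * x$k)"
    by (intro sum.cong refl sum.swap)
  also have "\<dots> = (\<Sum>\<mu>\<in>UNIV. \<Sum>i\<in>UNIV. \<Sum>k\<in>UNIV. cnj (x$i) * F \<mu> i k * x$k)"
    by (rule sum.swap)
  finally show ?thesis by (simp add: sd_def)
qed

lemma sd_add: "sd x (\<lambda>i k. F i k + G i k) = sd x F + sd x G"
  by (simp add: sd_def distrib_left distrib_right sum.distrib)

lemma sd_mult: "sd x (\<lambda>i k. a * F i k) = a * sd x F"
  by (simp add: sd_def sum_distrib_left mult_ac)

lemma sd_prod: "sd x (\<lambda>i k. \<Sum>j\<in>UNIV. cnj (P$j$i) * Q$j$k)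
   = (\<Sum>j\<in>UNIV. cnj (\<Sum>i\<in>UNIV. P$j$i * x$i) * (\<Sum>k\<in>UNIV. Q$j$k * x$k))"
proof -
  have "sd x (\<lambda>i k. \<Sum>j\<in>UNIV. cnj (P$j$i) * Q$j$k) = (\<Sum>i\<in>UNIV. \<Sum>k\<in>UNIV. \<Sum>j\<in>UNIV. cnj (x$i) * (cnj (P$j$i) * Q$j$k) * x$k)"
    by (simp add: sd_def sum_distrib_left sum_distrib_right)
  also have "\<dots> = (\<Sum>i\<in>UNIV. \<Sum>j\<in>UNIV. \<Sum>k\<in>UNIV. cnj (x$i) * (cnj (P$j$i) * Q$j$k) * x$k)"
    by (intro sum.cong refl sum.swap)
  also have "\<dots> = (\<Sum>j\<in>UNIV. \<Sum>i\<in>UNIV. \<Sum>k\<in>UNIV. cnj (x$i) * (cnj (P$j$i) * Q$j$k) * x$k)"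
    by (rule sum.swap)
  also have "\<dots> = (\<Sum>j\<in>UNIV. \<Sum>i\<in>UNIV. \<Sum>k\<in>UNIV. cnj (P$j$i * x$i) * (Q$j$k * x$k))"
    by (intro sum.cong refl) (simp add: mult_ac)
  also have "\<dots> = (\<Sum>j\<in>UNIV. cnj (\<Sum>i\<in>UNIV. P$j$i * x$i) * (\<Sum>k\<in>UNIV. Q$j$k * x$k))"
    by (simp only: cnj_sum sum_product)
  finally show ?thesis .
qed

lemma br_adj: "braket y (cadj P) z = (\<Sum>j\<in>UNIV. cnj (\<Sum>i\<in>UNIV. P$j$i * y$i) * z$j)"
proof -
  have "braket y (cadj P) z = (\<Sum>i\<in>UNIV. \<Sum>j\<in>UNIV. cnj (y$i) * (cnj (P$j$i) * z$j))"
    by (simp add: braket_def cinner_def cadj_def matrix_vector_mult_def sum_distrib_left)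
  also have "\<dots> = (\<Sum>j\<in>UNIV. \<Sum>i\<in>UNIV. cnj (y$i) * (cnj (P$j$i) * z$j))" by (rule sum.swap)
  also have "\<dots> = (\<Sum>j\<in>UNIV. cnj (\<Sum>i\<in>UNIV. P$j$i * y$i) * z$j)"
    by (intro sum.cong refl) (simp add: cnj_sum sum_distrib_left sum_distrib_right mult_ac)
  finally show ?thesis .
qed

lemma basis_complete:
  fixes b :: "'n \<Rightarrow> complex^'n"
  assumes orthonormal: "\<And>i j. cinner (b i) (b j) = (if i = j then 1 else 0)"
  shows "(\<Sum>n\<in>UNIV. b n $ i * cnj (b n $ k)) = (if i = k then 1 else 0)"
proof -
  define U :: "complex^'n^'n" where "U = (\<chi> i n. b n $ i)"
  have "cadj U ** U = mat 1"
    by (simp add: vec_eq_iff U_def matrix_matrix_mult_def cadj_def mat_def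
        orthonormal[unfolded cinner_def])
  hence "U ** cadj U = mat 1" using matrix_left_right_inverse by blast
  hence "(U ** cadj U) $ i $ k = mat 1 $ i $ k" by simp
  thus ?thesis by (simp add: U_def matrix_matrix_mult_def cadj_def mat_def)
qed




lemma rowsum:
  fixes A B C :: "'m::finite \<Rightarrow> complex^'n^'n" and b :: "'n \<Rightarrow> complex^'n"
    and c :: "'m \<Rightarrow> 'n \<Rightarrow> complex"
  assumes K: "\<And>i k. (\<Sum>\<mu>\<in>UNIV. \<Sum>j\<in>UNIV. cnj (C \<mu> $j$i) * A \<mu> $j$k
            + 2 * (cnj (B \<mu> $j$i) * B \<mu> $j$k) + cnj (A \<mu> $j$i) * C \<mu> $j$k) = 0"
    and orthonormal: "\<And>i j. cinner (b i) (b j) = (if i = j then 1 else 0)"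
    and diag: "\<And>\<mu>. A \<mu> = (\<Sum>n\<in>UNIV. cscale (c \<mu> n) (ketbra (b n) (b n)))"
  shows "(\<Sum>n2\<in>UNIV. \<Sum>\<mu>\<in>UNIV. 2 * (cmod (braket (b n1) (cadj (B \<mu>)) (b n2)))\<^sup>2
       + (if n1 = n2 then 2 * Re (c \<mu> n1 * braket (b n1) (cadj (C \<mu>)) (b n2)) else 0)) = 0"
proof -
  define x where "x = b n1"
  define w where "w \<mu> j = (\<Sum>i\<in>UNIV. B \<mu> $j$i * x$i)" for \<mu> j
  define v where "v \<mu> j = (\<Sum>i\<in>UNIV. C \<mu> $j$i * x$i)" for \<mu> j
  define Y where "Y \<mu> = (\<Sum>j\<in>UNIV. cnj (v \<mu> j) * x$j)" for \<mu>
  have F1: "(\<Sum>k\<in>UNIV. A \<mu> $j$k * x$k) = c \<mu> n1 * x$j" for \<mu> j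
  proof -
    have "(\<Sum>k\<in>UNIV. A \<mu> $j$k * x$k) = (\<Sum>k\<in>UNIV. \<Sum>m\<in>UNIV. c \<mu> m * (b m $ j * cnj (b m $ k)) * x$k)"
      by (simp add: diag cscale_def ketbra_def sum_distrib_right)
    also have "\<dots> = (\<Sum>m\<in>UNIV. \<Sum>k\<in>UNIV. c \<mu> m * (b m $ j * cnj (b m $ k)) * x$k)"
      by (rule sum.swap)
    also have "\<dots> = (\<Sum>m\<in>UNIV. c \<mu> m * b m $ j * (\<Sum>k\<in>UNIV. cnj (b m $ k) * x$k))"
      by (intro sum.cong refl) (simp add: sum_distrib_left mult_ac)
    also have "\<dots> = (\<Sum>m\<in>UNIV. (if m = n1 then 1 else 0) * (c \<mu> m * b m $ j))"
      by (intro sum.cong refl) (auto simp: x_def orthonormal[unfolded cinner_def])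
    also have "\<dots> = c \<mu> n1 * x$j" by (simp add: x_def mult_if_delta)
    finally show ?thesis .
  qed
  have F2: "braket x (cadj (C \<mu>)) x = Y \<mu>" for \<mu> by (simp add: br_adj Y_def v_def)
  have F3: "(\<Sum>n2\<in>UNIV. complex_of_real ((cmod (braket x (cadj (B \<mu>)) (b n2)))\<^sup>2))
             = (\<Sum>j\<in>UNIV. cnj (w \<mu> j) * w \<mu> j)" for \<mu>
  proof -
    have "(\<Sum>n2\<in>UNIV. complex_of_real ((cmod (braket x (cadj (B \<mu>)) (b n2)))\<^sup>2))
        = (\<Sum>n2\<in>UNIV. (\<Sum>j\<in>UNIV. cnj (w \<mu> j) * b n2 $ j) * cnj (\<Sum>l\<in>UNIV. cnj (w \<mu> l) * b n2 $ l))"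
      by (simp only: complex_norm_square br_adj w_def)
    also have "\<dots> = (\<Sum>n2\<in>UNIV. \<Sum>j\<in>UNIV. \<Sum>l\<in>UNIV. (cnj (w \<mu> j) * b n2 $ j) * cnj (cnj (w \<mu> l) * b n2 $ l))"
      by (simp only: cnj_sum sum_product)
    also have "\<dots> = (\<Sum>n2\<in>UNIV. \<Sum>j\<in>UNIV. \<Sum>l\<in>UNIV. cnj (w \<mu> j) * w \<mu> l * (b n2 $ j * cnj (b n2 $ l)))"
      by (simp add: mult_ac)
    also have "\<dots> = (\<Sum>j\<in>UNIV. \<Sum>n2\<in>UNIV. \<Sum>l\<in>UNIV. cnj (w \<mu> j) * w \<mu> l * (b n2 $ j * cnj (b n2 $ l)))"
      by (rule sum.swap)
    also have "\<dots> = (\<Sum>j\<in>UNIV. \<Sum>l\<in>UNIV. \<Sum>n2\<in>UNIV. cnj (w \<mu> j) * w \<mu> l * (b n2 $ j * cnj (b n2 $ l)))"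
      by (intro sum.cong refl sum.swap)
    also have "\<dots> = (\<Sum>j\<in>UNIV. \<Sum>l\<in>UNIV. cnj (w \<mu> j) * w \<mu> l * (\<Sum>n2\<in>UNIV. b n2 $ j * cnj (b n2 $ l)))"
      by (simp add: sum_distrib_left)
    also have "\<dots> = (\<Sum>j\<in>UNIV. \<Sum>l\<in>UNIV. (if j = l then 1 else 0) * (cnj (w \<mu> j) * w \<mu> l))"
      by (intro sum.cong refl) (auto simp: basis_complete[OF orthonormal])
    also have "\<dots> = (\<Sum>j\<in>UNIV. cnj (w \<mu> j) * w \<mu> j)" by (simp add: mult_if_delta)
    finally show ?thesis .
  qed
  have eqK: "(\<lambda>i k. \<Sum>\<mu>\<in>UNIV. \<Sum>j\<in>UNIV. cnj (C \<mu> $j$i) * A \<mu> $j$k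
            + 2 * (cnj (B \<mu> $j$i) * B \<mu> $j$k) + cnj (A \<mu> $j$i) * C \<mu> $j$k)
     = (\<lambda>i k. \<Sum>\<mu>\<in>UNIV. (\<Sum>j\<in>UNIV. cnj (C \<mu> $j$i) * A \<mu> $j$k)
            + 2 * (\<Sum>j\<in>UNIV. cnj (B \<mu> $j$i) * B \<mu> $j$k) + (\<Sum>j\<in>UNIV. cnj (A \<mu> $j$i) * C \<mu> $j$k))"
    by (simp add: sum.distrib sum_distrib_left)
  have "0 = sd x (\<lambda>i k. \<Sum>\<mu>\<in>UNIV. \<Sum>j\<in>UNIV. cnj (C \<mu> $j$i) * A \<mu> $j$k
            + 2 * (cnj (B \<mu> $j$i) * B \<mu> $j$k) + cnj (A \<mu> $j$i) * C \<mu> $j$k)"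
    by (simp add: K sd_def)
  also have "\<dots> = (\<Sum>\<mu>\<in>UNIV. sd x (\<lambda>i k. \<Sum>j\<in>UNIV. cnj (C \<mu> $j$i) * A \<mu> $j$k)
        + 2 * sd x (\<lambda>i k. \<Sum>j\<in>UNIV. cnj (B \<mu> $j$i) * B \<mu> $j$k)
        + sd x (\<lambda>i k. \<Sum>j\<in>UNIV. cnj (A \<mu> $j$i) * C \<mu> $j$k))"
    unfolding eqK sd_sum sd_add sd_mult ..
  also have "\<dots> = (\<Sum>\<mu>\<in>UNIV. c \<mu> n1 * Y \<mu> + 2 * (\<Sum>j\<in>UNIV. cnj (w \<mu> j) * w \<mu> j) + cnj (c \<mu> n1 * Y \<mu>))"
  proof (intro sum.cong refl)
    fix \<mu>
    have 1: "sd x (\<lambda>i k. \<Sum>j\<in>UNIV. cnj (C \<mu> $j$i) * A \<mu> $j$k) = c \<mu> n1 * Y \<mu>"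
      unfolding sd_prod F1 by (simp add: Y_def v_def sum_distrib_left mult_ac)
    have 2: "sd x (\<lambda>i k. \<Sum>j\<in>UNIV. cnj (B \<mu> $j$i) * B \<mu> $j$k) = (\<Sum>j\<in>UNIV. cnj (w \<mu> j) * w \<mu> j)"
      unfolding sd_prod w_def ..
    have 3: "sd x (\<lambda>i k. \<Sum>j\<in>UNIV. cnj (A \<mu> $j$i) * C \<mu> $j$k) = cnj (c \<mu> n1 * Y \<mu>)"
      unfolding sd_prod F1 by (simp add: Y_def v_def cnj_sum sum_distrib_left mult_ac)
    show "sd x (\<lambda>i k. \<Sum>j\<in>UNIV. cnj (C \<mu> $j$i) * A \<mu> $j$k)
        + 2 * sd x (\<lambda>i k. \<Sum>j\<in>UNIV. cnj (B \<mu> $j$i) * B \<mu> $j$k)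
        + sd x (\<lambda>i k. \<Sum>j\<in>UNIV. cnj (A \<mu> $j$i) * C \<mu> $j$k)
        = c \<mu> n1 * Y \<mu> + 2 * (\<Sum>j\<in>UNIV. cnj (w \<mu> j) * w \<mu> j) + cnj (c \<mu> n1 * Y \<mu>)"
      unfolding 1 2 3 ..
  qed
  finally have Z: "(\<Sum>\<mu>\<in>UNIV. c \<mu> n1 * Y \<mu> + 2 * (\<Sum>j\<in>UNIV. cnj (w \<mu> j) * w \<mu> j) + cnj (c \<mu> n1 * Y \<mu>)) = 0"
    by simp
  have "(\<Sum>n2\<in>UNIV. \<Sum>\<mu>\<in>UNIV. 2 * (cmod (braket (b n1) (cadj (B \<mu>)) (b n2)))\<^sup>2
       + (if n1 = n2 then 2 * Re (c \<mu> n1 * braket (b n1) (cadj (C \<mu>)) (b n2)) else 0))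
     = (\<Sum>\<mu>\<in>UNIV. \<Sum>n2\<in>UNIV. 2 * (cmod (braket x (cadj (B \<mu>)) (b n2)))\<^sup>2
       + (if n1 = n2 then 2 * Re (c \<mu> n1 * braket x (cadj (C \<mu>)) (b n2)) else 0))"
    unfolding x_def by (rule sum.swap)
  also have "\<dots> = (\<Sum>\<mu>\<in>UNIV. 2 * (\<Sum>n2\<in>UNIV. (cmod (braket x (cadj (B \<mu>)) (b n2)))\<^sup>2)
       + 2 * Re (c \<mu> n1 * Y \<mu>))"
    by (simp add: sum.distrib sum_distrib_left F2 x_def[symmetric])
  finally have L: "(\<Sum>n2\<in>UNIV. \<Sum>\<mu>\<in>UNIV. 2 * (cmod (braket (b n1) (cadj (B \<mu>)) (b n2)))\<^sup>2
       + (if n1 = n2 then 2 * Re (c \<mu> n1 * braket (b n1) (cadj (C \<mu>)) (b n2)) else 0))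
      = (\<Sum>\<mu>\<in>UNIV. 2 * (\<Sum>n2\<in>UNIV. (cmod (braket x (cadj (B \<mu>)) (b n2)))\<^sup>2)
       + 2 * Re (c \<mu> n1 * Y \<mu>))" .
  have G: "complex_of_real (\<Sum>\<mu>\<in>UNIV. 2 * (\<Sum>n2\<in>UNIV. (cmod (braket x (cadj (B \<mu>)) (b n2)))\<^sup>2)
       + 2 * Re (c \<mu> n1 * Y \<mu>))
     = (\<Sum>\<mu>\<in>UNIV. c \<mu> n1 * Y \<mu> + 2 * (\<Sum>j\<in>UNIV. cnj (w \<mu> j) * w \<mu> j) + cnj (c \<mu> n1 * Y \<mu>))"
  proof -
    have "complex_of_real (\<Sum>\<mu>\<in>UNIV. 2 * (\<Sum>n2\<in>UNIV. (cmod (braket x (cadj (B \<mu>)) (b n2)))\<^sup>2)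
       + 2 * Re (c \<mu> n1 * Y \<mu>))
      = (\<Sum>\<mu>\<in>UNIV. 2 * (\<Sum>n2\<in>UNIV. complex_of_real ((cmod (braket x (cadj (B \<mu>)) (b n2)))\<^sup>2))
       + complex_of_real (2 * Re (c \<mu> n1 * Y \<mu>)))" by simp
    also have "\<dots> = (\<Sum>\<mu>\<in>UNIV. c \<mu> n1 * Y \<mu> + 2 * (\<Sum>j\<in>UNIV. cnj (w \<mu> j) * w \<mu> j) + cnj (c \<mu> n1 * Y \<mu>))"
      by (intro sum.cong refl) (simp only: F3 complex_add_cnj[symmetric] add_ac)
    finally show ?thesis .
  qed
  from G Z have "complex_of_real (\<Sum>\<mu>\<in>UNIV. 2 * (\<Sum>n2\<in>UNIV. (cmod (braket x (cadj (B \<mu>)) (b n2)))\<^sup>2)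
       + 2 * Re (c \<mu> n1 * Y \<mu>)) = 0" by (rule trans)
  hence "(\<Sum>\<mu>\<in>UNIV. 2 * (\<Sum>n2\<in>UNIV. (cmod (braket x (cadj (B \<mu>)) (b n2)))\<^sup>2)
       + 2 * Re (c \<mu> n1 * Y \<mu>)) = 0" by (simp only: of_real_eq_0_iff)
  with L show ?thesis by (rule trans)
qed



theorem lemma1:
  fixes M M1 M2 :: "'m::finite \<Rightarrow> real \<Rightarrow> complex^'n^'n"
    and b :: "'n \<Rightarrow> complex^'n"
    and c :: "'m \<Rightarrow> 'n \<Rightarrow> complex"
    and R :: "real^'n^'n"
  assumes complete: "\<And>u. (\<Sum>\<mu>\<in>UNIV. cadj (M \<mu> u) ** M \<mu> u) = mat 1"
    and deriv1: "\<And>\<mu> u. (M \<mu> has_vector_derivative M1 \<mu> u) (at u)"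
    and deriv2: "\<And>\<mu> u. (M1 \<mu> has_vector_derivative M2 \<mu> u) (at u)"
    and cont2: "\<And>\<mu>. continuous_on UNIV (M2 \<mu>)"
    and orthonormal: "\<And>i j. cinner (b i) (b j) = (if i = j then 1 else 0)"
    and diag: "\<And>\<mu>. M \<mu> 0 = (\<Sum>n\<in>UNIV. cscale (c \<mu> n) (ketbra (b n) (b n)))"
    and R_def: "R = (\<chi> n1 n2. \<Sum>\<mu>\<in>UNIV.
                   2 * (cmod (braket (b n1) (cadj (M1 \<mu> 0)) (b n2)))\<^sup>2
                 + (if n1 = n2 then 2 * Re (c \<mu> n1 * braket (b n1) (cadj (M2 \<mu> 0)) (b n2)) else 0))"
    and R_nz: "R \<noteq> 0"
  shows "trace R \<noteq> 0
     \<and> (let P = mat 1 - (1 / trace R) *\<^sub>R R in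
          (\<forall>i j. 0 \<le> P $ i $ j) \<and> (\<forall>i. (\<Sum>j\<in>UNIV. P $ i $ j) = 1))"
proof -
  have K: "\<And>i k. (\<Sum>\<mu>\<in>UNIV. \<Sum>j\<in>UNIV. cnj (M2 \<mu> 0 $j$i) * M \<mu> 0 $j$k
            + 2 * (cnj (M1 \<mu> 0 $j$i) * M1 \<mu> 0 $j$k) + cnj (M \<mu> 0 $j$i) * M2 \<mu> 0 $j$k) = 0"
    by (rule second_identity[OF complete deriv1 deriv2])
  have rows: "(\<Sum>j\<in>UNIV. R$i$j) = 0" for i
  proof -
    have "(\<Sum>n2\<in>UNIV. \<Sum>\<mu>\<in>UNIV. 2 * (cmod (braket (b i) (cadj (M1 \<mu> 0)) (b n2)))\<^sup>2
       + (if i = n2 then 2 * Re (c \<mu> i * braket (b i) (cadj (M2 \<mu> 0)) (b n2)) else 0)) = 0"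
      by (rule rowsum[where A="\<lambda>\<mu>. M \<mu> 0" and B="\<lambda>\<mu>. M1 \<mu> 0" and C="\<lambda>\<mu>. M2 \<mu> 0", OF K orthonormal diag])
    thus ?thesis by (simp add: R_def)
  qed
  have off: "0 \<le> R$i$j" if "i \<noteq> j" for i j
    using that by (simp add: R_def sum_nonneg)
  show ?thesis by (rule final_alg[OF off rows R_nz])
qed


end
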